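(* Suppose AS.1 and AS.2 hold. Consider a recursive iteration $(\ell,i)$ of the MOFFTR algorithm described in the context, and suppose that $i_{\ell-1}\ge1$ iterations of the algorithm have been completed at level $\ell-1$ (iterates $x_{\ell-1,k}$, gradients $g_{\ell-1,k}=\nabla h_{\ell-1}(x_{\ell-1,k})$, steps $s_{\ell-1,k}$). Then, with $\delta_{\ell-1}=\alpha\|\Delta_{\ell,i}\|$, \[ \Big|g_{\ell,i}^Ts_{\ell,i}-\frac1\omega\sum_{k=0}^{i_{\ell-1}-1}g_{\ell-1,k}^Ts_{\ell-1,k}\Big|\le\frac{2\,i^{\max}_{\ell-1}\,L\,\delta_{\ell-1}^2}{\omega\,\sigma_{\min}[P_\ell]^2}. \]
   Context: Notation: $\|\cdot\|$ is the Euclidean norm (spectral norm for matrices); $|x|$ is the componentwise absolute value; $\sigma_{\min}[M]$ is the smallest singular value of $M$; for a positive vector $w$, $D(w)=\mathrm{diag}(1/w_1,\dots,1/w_m)$. Setting: $r\ge1$ levels; functions $f_\ell:\mathbb{R}^{n_\ell}\to\mathbb{R}$, $n_r=n$, $f_r=f$; for $\ell\ge2$ full-rank linear $R_\ell:\mathbb{R}^{n_\ell}\to\mathbb{R}^{n_{\ell-1}}$, $P_\ell:\mathbb{R}^{n_{\ell-1}}\to\mathbb{R}^{n_\ell}$ with $\omega P_\ell=R_\ell^T$, $\omega>0$. AS.1: each $f_\ell$ is continuously differentiable. AS.2: each $\nabla f_\ell$ is Lipschitz with constant $L\ge0$. Algorithm MOFFTR$(\ell,h_\ell,x_{\ell,0},\epsilon_\ell,i^{\max}_\ell,\delta_\ell,w_{\ell,0})$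 with constants $\kappa_R\in(0,1)$, $\alpha\ge1$, $\tau\in(0,1]$, $\kappa_B\ge1$, $\varsigma_j\in(0,1]$; $i=0$. Step 1: if $\ell<r$ and $\|P_{\ell+1}(x_{\ell,i}-x_{\ell,0})\|>\delta_\ell$, return $x_{\ell,i-1}$. Else $g_{\ell,i}=\nabla h_\ell(x_{\ell,i})$; if $\|g_{\ell,i}\|\le\epsilon_\ell$ or $i=i^{\max}_\ell$, return $x_{\ell,i}$. Step 2: $\widehat\Delta_{\ell,i}=D(w_{\ell,i})|g_{\ell,i}|$; $\Delta_{\ell,i}=\widehat\Delta_{\ell,i}$ if $\ell=r$, else $\Delta_{\ell,i}=\min[2\delta_\ell/(\|P_{\ell+1}\|\|\widehat\Delta_{\ell,i}\|),1]\widehat\Delta_{\ell,i}$. For $i>0$ choose $w_{\ell,i}$ with $w_{\ell,i,j}\ge\varsigma_j$. If a Taylor step is chosen, go to Step 4. Step 3: choose $w_{\ell-1,0}$ with $w_{\ell-1,0,j}\ge\varsigma_j$, a variant-dependent "lower-level weights large enough" condition, and $\|D(w_{\ell-1,0})|R_\ell g_{\ell,i}|\|\le\alpha\|\Delta_{\ell,i}\|/\|P_\ell\|$. If $\ell=1$ or $\sum_j[R_\ell g_{\ell,i}]_j^2/w_{\ell-1,0,j}<\kappa_R\sum_j g_{\ell,i,j}^2/w_{\ell,i,j}$, go to Step 4. Otherwise (recursive iteration) $s_{\ell,i}=P_\ell[\mathrm{MOFFTR}(\ell-1,h_{\ell-1},R_\ell x_{\ell,i},\epsilon_{\ell-1},i^{\max}_{\ell-1},\alpha\|\Delta_{\ell,i}\|,w_{\ell-1,0})-R_\ell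 x_{\ell,i}]$ with $h_{\ell-1}(x_{\ell-1,0}+s)=f_{\ell-1}(x_{\ell-1,0}+s)+(R_\ell g_{\ell,i}-\nabla f_{\ell-1}(x_{\ell-1,0}))^Ts$, $x_{\ell-1,0}=R_\ell x_{\ell,i}$; go to Step 5. Step 4 (Taylor iteration): symmetric $B$ with $\|B\|\le\kappa_B$; step $s$ with $|s_j|\le\Delta_{\ell,i,j}$ and $g^Ts+\frac12s^TBs\le\tau(g^Ts^Q+\frac12(s^Q)^TBs^Q)$, $s^L_j=-\mathrm{sign}(g_j)\Delta_{\ell,i,j}$, $s^Q=\gamma s^L$, $\gamma=\min[1,|g^Ts^L|/((s^L)^TBs^L)]$ if $(s^L)^TBs^L>0$, else $\gamma=1$. Step 5: $x_{\ell,i+1}=x_{\ell,i}+s_{\ell,i}$, $i\leftarrow i+1$, go to Step 1. Top-level call MOFFTR$(r,f,x_{r,0},\epsilon_r,i^{\max}_r,+\infty,w_{r,0})$, $h_r=f$. *)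

theory Defs
  imports "HOL-Analysis.Analysis"
begin

text \<open>Smallest singular value of a (rectangular) real matrix A with k columns and
  m rows: the singular values are the square roots of the eigenvalues of the
  Gram matrix of size min(m,k), i.e. of A^T A if k \<le> m, otherwise of A A^T.\<close>
definition sigma_min :: "real^'k^'m \<Rightarrow> real" where
  "sigma_min A =
     (if CARD('k) \<le> CARD('m)
      then sqrt (Inf {lam. \<exists>v. v \<noteq> 0 \<and> (transpose A ** A) *v v = lam *\<^sub>R v})
      else sqrt (Inf {lam. \<exists>v. v \<noteq> 0 \<and> (A ** transpose A) *v v = lam *\<^sub>R v}))"

end

theory Submission
  imports Defs
begin


lemma PtP_inner:
  fixes P :: "real^'m^'n"
  shows "((transpose P ** P) *v u) \<bullet> w = (P *v u) \<bullet> (P *v w)"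
proof -
  have "((transpose P ** P) *v u) = transpose P *v (P *v u)" by (simp add: matrix_vector_mul_assoc)
  also have "\<dots> = (P *v u) v* P" by simp
  finally show ?thesis by (simp add: dot_lmul_matrix)
qed

lemma norm_add_scale_sq:
  fixes a b :: "'a::real_inner"
  shows "norm (a + t *\<^sub>R b)^2 = norm a^2 + 2 * t * (a \<bullet> b) + t^2 * norm b^2"
  unfolding power2_norm_eq_inner
  by (simp add: inner_add_left inner_add_right inner_commute algebra_simps power2_eq_square)

lemma sigma_min_bound:
  fixes P :: "real^'m^'n"
  assumes dims: "CARD('m) \<le> CARD('n)" and inj: "inj ((*v) P)"
  shows "sigma_min P > 0 \<and> (\<forall>v. sigma_min P * norm v \<le> norm (P *v v))"
proof -
  define A where "A = transpose P ** P"
  define f where "f = (\<lambda>v::real^'m. norm (P *v v)^2)"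
  have cont: "continuous_on (sphere 0 1) f" unfolding f_def
    by (intro continuous_intros)
  obtain i :: 'm where True by simp
  have ne: "sphere (0::real^'m) 1 \<noteq> {}"
    using norm_axis_1[of i] by (metis dist_0_norm mem_sphere empty_iff)
  obtain u where u: "u \<in> sphere 0 1" and umin: "\<And>y. y \<in> sphere 0 1 \<Longrightarrow> f u \<le> f y"
    using continuous_attains_inf[OF compact_sphere ne cont] by blast
  define \<mu> where "\<mu> = f u"
  have nu: "norm u = 1" using u by simp
  have Pu0: "P *v u \<noteq> 0"
  proof
    assume "P *v u = 0"
    hence "P *v u = P *v 0" by simp
    hence "u = 0" using inj by (meson injD)
    thus False using nu by simp
  qed
  have mupos: "\<mu> > 0" unfolding \<mu>_def f_def using Pu0 by simp
  have lb: "\<mu> * norm v ^ 2 \<le> norm (P *v v)^2" for v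
  proof (cases "v = 0")
    case True thus ?thesis by simp
  next
    case False
    define w where "w = (1 / norm v) *\<^sub>R v"
    have "w \<in> sphere 0 1" using False by (simp add: w_def)
    hence "\<mu> \<le> f w" using umin \<mu>_def by simp
    also have "f w = norm (P *v v)^2 / norm v ^2"
      by (simp add: f_def w_def matrix_vector_mult_scaleR power_divide)
    finally show ?thesis using False by (simp add: field_simps)
  qed
  define z where "z = A *v u - \<mu> *\<^sub>R u"
  have key: "\<And>t. norm (P *v (u + t *\<^sub>R z))^2 - \<mu> * norm (u + t *\<^sub>R z)^2
       = 2 * t * (z \<bullet> z) + t^2 * (norm (P *v z)^2 - \<mu> * norm z ^2)"
  proof -
    fix t :: real
    have e1: "(P *v u) \<bullet> (P *v z) = (A *v u) \<bullet> z" by (simp add: A_def PtP_inner)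
    have e2: "norm (P *v u)^2 = \<mu>" by (simp add: \<mu>_def f_def)
    have e3: "(A *v u) \<bullet> z = z \<bullet> z + \<mu> * (u \<bullet> z)" by (simp add: z_def inner_diff_left)
    have "norm (P *v (u + t *\<^sub>R z))^2 = norm (P *v u)^2 + 2 * t * ((P *v u) \<bullet> (P *v z)) + t^2 * norm (P *v z)^2"
      by (simp add: matrix_vector_right_distrib matrix_vector_mult_scaleR norm_add_scale_sq)
    moreover have "norm (u + t *\<^sub>R z)^2 = 1 + 2 * t * (u \<bullet> z) + t^2 * norm z ^2"
      using nu by (simp add: norm_add_scale_sq)
    ultimately show "norm (P *v (u + t *\<^sub>R z))^2 - \<mu> * norm (u + t *\<^sub>R z)^2
       = 2 * t * (z \<bullet> z) + t^2 * (norm (P *v z)^2 - \<mu> * norm z ^2)"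
      unfolding e1 e2 e3 by (simp add: algebra_simps)
  qed
  define a where "a = z \<bullet> z"
  define c where "c = norm (P *v z)^2 - \<mu> * norm z ^2"
  have c0: "c \<ge> 0" using lb[of z] by (simp add: c_def)
  have "a \<le> 0"
  proof (rule ccontr)
    assume "\<not> a \<le> 0" hence ap: "a > 0" by simp
    define t where "t = - a / (c + 1)"
    have E0: "0 \<le> 2 * t * a + t^2 * c" using key[of t] lb[of "u + t *\<^sub>R z"] by (simp add: a_def c_def)
    have td: "t * (c + 1) = - a" using c0 by (simp add: t_def)
    have "(c+1)^2 * (2 * t * a + t^2 * c) = 2 * a * (t * (c+1)) * (c+1) + (t * (c+1))^2 * c"
      by (simp add: algebra_simps power2_eq_square)
    also have "\<dots> = - (a^2 * (c + 2))" unfolding td by (simp add: algebra_simps power2_eq_square)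
    also have "\<dots> < 0" using ap c0 by simp
    finally have "(c+1)^2 * (2 * t * a + t^2 * c) < 0" .
    moreover have "(c+1)^2 > 0" using c0 by simp
    ultimately have "2 * t * a + t^2 * c < 0" by (simp add: mult_less_0_iff)
    thus False using E0 by simp
  qed
  hence "z = 0" unfolding a_def using inner_ge_zero[of z] inner_eq_zero_iff[of z] by linarith
  hence eig: "A *v u = \<mu> *\<^sub>R u" by (simp add: z_def)
  have inS: "\<mu> \<in> {lam. \<exists>v. v \<noteq> 0 \<and> (transpose P ** P) *v v = lam *\<^sub>R v}"
    using eig nu A_def by (auto intro!: exI[of _ u])
  have lower: "\<mu> \<le> lam" if lamS: "lam \<in> {lam. \<exists>v. v \<noteq> 0 \<and> (transpose P ** P) *v v = lam *\<^sub>R v}" for lam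
  proof -
    obtain v where v: "v \<noteq> 0" "(transpose P ** P) *v v = lam *\<^sub>R v" using lamS by blast
    have "lam * norm v ^2 = ((transpose P ** P) *v v) \<bullet> v" using v by (simp add: power2_norm_eq_inner)
    also have "\<dots> = norm (P *v v)^2" by (simp add: PtP_inner power2_norm_eq_inner)
    finally have "\<mu> * norm v ^ 2 \<le> lam * norm v ^2" using lb[of v] by simp
    thus ?thesis using v by simp
  qed
  have sm: "sigma_min P = sqrt \<mu>"
    unfolding sigma_min_def using dims cInf_eq_minimum[OF inS lower] by simp
  have "sqrt \<mu> * norm v \<le> norm (P *v v)" for v
  proof -
    have "sqrt (\<mu> * norm v ^2) \<le> sqrt (norm (P *v v)^2)" using lb[of v] by (simp only: real_sqrt_le_iff)
    thus ?thesis using mupos by (simp add: real_sqrt_mult)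
  qed
  thus ?thesis using sm mupos by simp
qed

theorem lemma3p4:
  fixes fm :: "real^'m \<Rightarrow> real" and gradfm :: "real^'m \<Rightarrow> real^'m"
    and fl :: "real^'n \<Rightarrow> real" and gradfl :: "real^'n \<Rightarrow> real^'n"
    and hl :: "real^'n \<Rightarrow> real"
    and L \<omega> \<alpha> eps :: real
    and P :: "real^'m^'n" and R :: "real^'n^'m"
    and xl g sl Dl :: "real^'n"
    and x s gm :: "nat \<Rightarrow> real^'m"
    and il imax :: nat
  assumes
    \<comment> \<open>AS.1 and AS.2 for the functions at levels l and l-1\<close>
    AS1m: "\<And>y. (fm has_derivative (\<lambda>v. gradfm y \<bullet> v)) (at y)" "continuous_on UNIV gradfm"
    and AS1l: "\<And>y. (fl has_derivative (\<lambda>v. gradfl y \<bullet> v)) (at y)" "continuous_on UNIV gradfl"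
    and AS2: "L \<ge> 0" "\<And>y z. norm (gradfm y - gradfm z) \<le> L * norm (y - z)"
             "\<And>y z. norm (gradfl y - gradfl z) \<le> L * norm (y - z)"
    \<comment> \<open>transfer operators: full rank, omega P = R^T, lower level coarser\<close>
    and dims: "CARD('m) \<le> CARD('n)"
    and fullrank: "rank R = min CARD('m) CARD('n)"
    and omega: "\<omega> > 0" "\<omega> *\<^sub>R P = transpose R"
    \<comment> \<open>current level-l iterate and gradient of h_l there\<close>
    and hl_grad: "(hl has_derivative (\<lambda>v. g \<bullet> v)) (at xl)"
    and alpha: "\<alpha> \<ge> 1"
    \<comment> \<open>the lower-level model h_(l-1) and its gradients at the lower iterates\<close>
    and x0: "x 0 = R *v xl"
    and gm: "\<And>k. ((\<lambda>y. fm y + (R *v g - gradfm (x 0)) \<bullet> (y - x 0))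
                      has_derivative (\<lambda>v. gm k \<bullet> v)) (at (x k))"
    \<comment> \<open>il \<ge> 1 completed lower-level iterations, returning x il\<close>
    and il: "il \<ge> 1" "il \<le> imax"
    and steps: "\<And>k. k < il \<Longrightarrow> x (Suc k) = x k + s k"
    and notstop: "\<And>k. k < il \<Longrightarrow> norm (gm k) > eps \<and> k < imax"
    and inTR: "\<And>k. k \<le> il \<Longrightarrow> norm (P *v (x k - x 0)) \<le> \<alpha> * norm Dl"
    \<comment> \<open>the recursive step at level l\<close>
    and sl: "sl = P *v (x il - x 0)"
  shows "\<bar>g \<bullet> sl - (1 / \<omega>) * (\<Sum>k<il. gm k \<bullet> s k)\<bar>
           \<le> 2 * real imax * L * (\<alpha> * norm Dl)^2 / (\<omega> * (sigma_min P)^2)"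
  proof -
  define c where "c = R *v g - gradfm (x 0)"
  define D where "D = \<alpha> * norm Dl"
  have gmk: "gm k = gradfm (x k) + c" for k
  proof -
    have d1: "((\<lambda>y. fm y + (R *v g - gradfm (x 0)) \<bullet> (y - x 0))
                      has_derivative (\<lambda>v. (gradfm (x k) + c) \<bullet> v)) (at (x k))"
      unfolding c_def inner_add_left
    proof (intro has_derivative_add AS1m(1) has_derivative_inner_right)
      show "((\<lambda>y. y - x 0) has_derivative (\<lambda>v. v)) (at (x k))"
        using has_derivative_diff[OF has_derivative_ident has_derivative_const[of "x 0" "at (x k)"]] by simp
    qed
    have "(\<lambda>v. gm k \<bullet> v) = (\<lambda>v. (gradfm (x k) + c) \<bullet> v)"
      using has_derivative_unique[OF gm[of k] d1] .
    hence "gm k \<bullet> (gm k - (gradfm (x k) + c)) = (gradfm (x k) + c) \<bullet> (gm k - (gradfm (x k) + c))"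
      by metis
    hence "(gm k - (gradfm (x k) + c)) \<bullet> (gm k - (gradfm (x k) + c)) = 0"
      by (simp add: inner_diff_left)
    thus ?thesis by simp
  qed
  have injR: "inj ((*v) (transpose R))"
    using fullrank dims rank_transpose[of R] full_rank_injective[of "transpose R"] by simp
  have Pdef: "P = (1/\<omega>) *\<^sub>R transpose R" using omega by (metis divide_inverse_commute divide_self_if less_irrefl scaleR_one scaleR_scaleR omega(2))
  have injP: "inj ((*v) P)"
  proof (rule injI)
    fix a b assume "P *v a = P *v b"
    hence "(1/\<omega>) *\<^sub>R (transpose R *v a) = (1/\<omega>) *\<^sub>R (transpose R *v b)"
      by (simp add: Pdef scaleR_matrix_vector_assoc[symmetric] del: transpose_matrix_vector)
    hence "transpose R *v a = transpose R *v b" using omega by simp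
    thus "a = b" using injR by (meson injD)
  qed
  obtain \<sigma>pos: "sigma_min P > 0" and \<sigma>b: "\<And>v. sigma_min P * norm v \<le> norm (P *v v)"
    using sigma_min_bound[OF dims injP] by blast
  define \<sigma> where "\<sigma> = sigma_min P"
  have xb: "norm (x k - x 0) \<le> D / \<sigma>" if "k \<le> il" for k
  proof -
    have "\<sigma> * norm (x k - x 0) \<le> D" using \<sigma>b[of "x k - x 0"] inTR[OF that] by (simp add: \<sigma>_def D_def)
    thus ?thesis using \<sigma>pos by (simp add: \<sigma>_def field_simps)
  qed
  have D0: "D \<ge> 0" using alpha by (simp add: D_def)
  have tel: "x j - x 0 = (\<Sum>k<j. s k)" if "j \<le> il" for j
    using that
  proof (induction j)
    case 0 thus ?case by simp
  next
    case (Suc j) thus ?case using steps[of j] by simp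
  qed
  have gsl: "g \<bullet> sl = (1/\<omega>) * ((R *v g) \<bullet> (x il - x 0))"
  proof -
    have "g \<bullet> sl = (1/\<omega>) * (g \<bullet> (transpose R *v (x il - x 0)))"
      by (simp add: sl Pdef scaleR_matrix_vector_assoc[symmetric] del: transpose_matrix_vector)
    also have "g \<bullet> (transpose R *v (x il - x 0)) = (R *v g) \<bullet> (x il - x 0)"
      using dot_lmul_matrix[of "x il - x 0" R g] by (simp add: inner_commute)
    finally show ?thesis .
  qed
  have gm0: "gm 0 = R *v g" using gmk[of 0] by (simp add: c_def)
  have "g \<bullet> sl - (1 / \<omega>) * (\<Sum>k<il. gm k \<bullet> s k) = (1/\<omega>) * (\<Sum>k<il. (gm 0 - gm k) \<bullet> s k)"
    using gsl tel[of il] gm0 by (simp add: inner_sum_right inner_diff_left sum_subtractf algebra_simps)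
  also have "\<dots> = (1/\<omega>) * (\<Sum>k<il. (gradfm (x 0) - gradfm (x k)) \<bullet> s k)"
    by (simp add: gmk)
  finally have eq: "\<bar>g \<bullet> sl - (1 / \<omega>) * (\<Sum>k<il. gm k \<bullet> s k)\<bar> = (1/\<omega>) * \<bar>\<Sum>k<il. (gradfm (x 0) - gradfm (x k)) \<bullet> s k\<bar>"
    using omega by (simp add: abs_mult)
  have termb: "\<bar>(gradfm (x 0) - gradfm (x k)) \<bullet> s k\<bar> \<le> 2 * L * D^2 / \<sigma>^2" if "k < il" for k
  proof -
    have sk: "s k = (x (Suc k) - x 0) - (x k - x 0)" using steps[OF that] by simp
    have ns: "norm (s k) \<le> 2 * (D / \<sigma>)"
      using norm_triangle_ineq4[of "x (Suc k) - x 0" "x k - x 0"] xb[of "Suc k"] xb[of k] that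
      unfolding sk by simp
    have "\<bar>(gradfm (x 0) - gradfm (x k)) \<bullet> s k\<bar> \<le> norm (gradfm (x 0) - gradfm (x k)) * norm (s k)"
      by (rule Cauchy_Schwarz_ineq2)
    also have "\<dots> \<le> (L * (D / \<sigma>)) * (2 * (D / \<sigma>))"
    proof (rule mult_mono)
      have "norm (gradfm (x 0) - gradfm (x k)) \<le> L * norm (x k - x 0)"
        using AS2(2)[of "x 0" "x k"] by (simp add: norm_minus_commute)
      also have "\<dots> \<le> L * (D / \<sigma>)" using xb[of k] that AS2(1) by (intro mult_left_mono) auto
      finally show "norm (gradfm (x 0) - gradfm (x k)) \<le> L * (D / \<sigma>)" .
    qed (use ns AS2(1) D0 \<sigma>pos \<sigma>_def in auto)
    also have "\<dots> = 2 * L * D^2 / \<sigma>^2" by (simp add: power2_eq_square)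
    finally show ?thesis .
  qed
  have "\<bar>\<Sum>k<il. (gradfm (x 0) - gradfm (x k)) \<bullet> s k\<bar> \<le> (\<Sum>k<il. \<bar>(gradfm (x 0) - gradfm (x k)) \<bullet> s k\<bar>)"
    by (rule sum_abs)
  also have "\<dots> \<le> (\<Sum>k<il. 2 * L * D^2 / \<sigma>^2)" by (intro sum_mono termb) simp
  also have "\<dots> = real il * (2 * L * D^2 / \<sigma>^2)" by simp
  also have "\<dots> \<le> real imax * (2 * L * D^2 / \<sigma>^2)"
    using il AS2(1) by (intro mult_right_mono) auto
  finally have "(1/\<omega>) * \<bar>\<Sum>k<il. (gradfm (x 0) - gradfm (x k)) \<bullet> s k\<bar> \<le> (1/\<omega>) * (real imax * (2 * L * D^2 / \<sigma>^2))"
    using omega by (intro mult_left_mono) auto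
  also have "\<dots> = 2 * real imax * L * (\<alpha> * norm Dl)^2 / (\<omega> * (sigma_min P)^2)"
    by (simp add: D_def \<sigma>_def)
  finally show ?thesis using eq by simp
qed

end
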